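(* Let $R$ be a ring, $N$ an exact complex of left $R$-modules and $M$ a bounded below complex of left $R$-modules. If $Z_n(N)\in\underline{\mathfrak{Pr}}^{-1}_{R\text{-Mod}}(M_n)$ for every $n\in\mathbb{Z}$, then $N\in\underline{\mathfrak{Pr}}^{-1}_{\mathscr{C}(R)}(M)$.
   Context: Complexes are homologically indexed, $Z_n(N)=\mathrm{Ker}\,d_n^N$. A complex $M$ is bounded below if there is $b$ with $M_n=0$ for all $n\le b$. For objects $M,N$ of an abelian category $\mathscr{A}$ with enough projectives ($R\text{-Mod}$ or the category $\mathscr{C}(R)$ of complexes), $M$ is $N$-subprojective if every morphism $M\to N$ factors through a projective object of $\mathscr{A}$; $\underline{\mathfrak{Pr}}^{-1}_{\mathscr{A}}(M)$ is the class of all $N$ such that $M$ is $N$-subprojective. *)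

theory Defs
  imports "HOL-Algebra.Module"
begin

definition left_module :: "'r ring \<Rightarrow> ('r, 'a) module \<Rightarrow> bool" where
  "left_module R M \<longleftrightarrow> ring R \<and> abelian_group M \<and> module_axioms R M"

definition lmod_hom :: "'r ring \<Rightarrow> ('r, 'a) module \<Rightarrow> ('r, 'b) module \<Rightarrow> ('a \<Rightarrow> 'b) set" where
  "lmod_hom R M N = {f.
     (\<forall>x\<in>carrier M. f x \<in> carrier N) \<and>
     (\<forall>x\<in>carrier M. \<forall>y\<in>carrier M. f (add M x y) = add N (f x) (f y)) \<and>
     (\<forall>a\<in>carrier R. \<forall>x\<in>carrier M. f (smult M a x) = smult N a (f x))}"

definition free_mod :: "'r ring \<Rightarrow> 'p set \<Rightarrow> ('r, 'p \<Rightarrow> 'r) module" where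
  "free_mod R X = \<lparr> carrier = {f. (\<forall>x. f x \<in> carrier R) \<and> finite {x. f x \<noteq> zero R}
                                   \<and> {x. f x \<noteq> zero R} \<subseteq> X},
                    mult = (\<lambda>f g. undefined), one = undefined,
                    zero = (\<lambda>x. zero R),
                    add = (\<lambda>f g x. add R (f x) (g x)),
                    smult = (\<lambda>a f x. mult R a (f x)) \<rparr>"

definition prod_mod :: "('r, 'a) module \<Rightarrow> ('r, 'b) module \<Rightarrow> ('r, 'a \<times> 'b) module" where
  "prod_mod A B = \<lparr> carrier = carrier A \<times> carrier B,
                    mult = (\<lambda>u v. undefined), one = undefined,
                    zero = (zero A, zero B),
                    add = (\<lambda>u v. (add A (fst u) (fst v), add B (snd u) (snd v))),
                    smult = (\<lambda>a u. (smult A a (fst u), smult B a (snd u))) \<rparr>"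

text \<open>Projective left module: a direct summand of a free module
  (equivalent to the lifting property).\<close>
definition projective_mod :: "'r ring \<Rightarrow> ('r, 'p) module \<Rightarrow> bool" where
  "projective_mod R P \<longleftrightarrow> left_module R P \<and>
     (\<exists>X :: 'p set. \<exists>\<pi>\<in>lmod_hom R (free_mod R X) P. \<exists>\<sigma>\<in>lmod_hom R P (free_mod R X).
        \<forall>x\<in>carrier P. \<pi> (\<sigma> x) = x)"

definition is_complex :: "'r ring \<Rightarrow> (int \<Rightarrow> ('r, 'a) module) \<Rightarrow> (int \<Rightarrow> 'a \<Rightarrow> 'a) \<Rightarrow> bool" where
  "is_complex R C d \<longleftrightarrow> (\<forall>n. left_module R (C n) \<and> d n \<in> lmod_hom R (C n) (C (n - 1)) \<and>
      (\<forall>x\<in>carrier (C n). d (n - 1) (d n x) = zero (C (n - 2))))"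

definition chain_map :: "'r ring \<Rightarrow> (int \<Rightarrow> ('r, 'a) module) \<Rightarrow> (int \<Rightarrow> 'a \<Rightarrow> 'a)
     \<Rightarrow> (int \<Rightarrow> ('r, 'b) module) \<Rightarrow> (int \<Rightarrow> 'b \<Rightarrow> 'b) \<Rightarrow> (int \<Rightarrow> 'a \<Rightarrow> 'b) \<Rightarrow> bool" where
  "chain_map R C dC D dD f \<longleftrightarrow> (\<forall>n. f n \<in> lmod_hom R (C n) (D n) \<and>
      (\<forall>x\<in>carrier (C n). f (n - 1) (dC n x) = dD n (f n x)))"

definition cycles :: "(int \<Rightarrow> ('r, 'a) module) \<Rightarrow> (int \<Rightarrow> 'a \<Rightarrow> 'a) \<Rightarrow> int \<Rightarrow> ('r, 'a) module" where
  "cycles C d n = (C n)\<lparr> carrier := {x \<in> carrier (C n). d n x = zero (C (n - 1))} \<rparr>"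

definition exact_complex :: "'r ring \<Rightarrow> (int \<Rightarrow> ('r, 'a) module) \<Rightarrow> (int \<Rightarrow> 'a \<Rightarrow> 'a) \<Rightarrow> bool" where
  "exact_complex R C d \<longleftrightarrow> is_complex R C d \<and>
     (\<forall>n. carrier (cycles C d n) = d (n + 1) ` carrier (C (n + 1)))"

definition bounded_below :: "(int \<Rightarrow> ('r, 'a) module) \<Rightarrow> bool" where
  "bounded_below C \<longleftrightarrow> (\<exists>b. \<forall>n\<le>b. carrier (C n) = {zero (C n)})"

text \<open>Free complex on a graded set X: the direct sum of disks D^n(R^(X_n)),
  i.e. F_n = R^(X_n) + R^(X_(n+1)) with d_n(a,b) = (0,a).\<close>
definition free_cplx :: "'r ring \<Rightarrow> (int \<Rightarrow> 'q set) \<Rightarrow> int \<Rightarrow> ('r, ('q \<Rightarrow> 'r) \<times> ('q \<Rightarrow> 'r)) module" where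
  "free_cplx R X n = prod_mod (free_mod R (X n)) (free_mod R (X (n + 1)))"

definition free_cplx_d :: "'r ring \<Rightarrow> int \<Rightarrow> ('q \<Rightarrow> 'r) \<times> ('q \<Rightarrow> 'r) \<Rightarrow> ('q \<Rightarrow> 'r) \<times> ('q \<Rightarrow> 'r)" where
  "free_cplx_d R n u = ((\<lambda>x. zero R), fst u)"

text \<open>Projective object of C(R): a direct summand of a free complex.\<close>
definition projective_cplx :: "'r ring \<Rightarrow> (int \<Rightarrow> ('r, 'q) module) \<Rightarrow> (int \<Rightarrow> 'q \<Rightarrow> 'q) \<Rightarrow> bool" where
  "projective_cplx R Q dQ \<longleftrightarrow> is_complex R Q dQ \<and>
     (\<exists>X :: int \<Rightarrow> 'q set. \<exists>\<pi> \<sigma>.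
        chain_map R (free_cplx R X) (free_cplx_d R) Q dQ \<pi> \<and>
        chain_map R Q dQ (free_cplx R X) (free_cplx_d R) \<sigma> \<and>
        (\<forall>n. \<forall>x\<in>carrier (Q n). \<pi> n (\<sigma> n x) = x))"

end

theory Submission
  imports Defs
begin


lemma lm_ring: "left_module R M \<Longrightarrow> ring R" by (simp add: left_module_def)
lemma lm_ag: "left_module R M \<Longrightarrow> abelian_group M" by (simp add: left_module_def)
lemma lm_ax: "left_module R M \<Longrightarrow> module_axioms R M" by (simp add: left_module_def)

context
  fixes R :: "'r ring" and M :: "('r,'a) module"
  assumes lm: "left_module R M"
begin

interpretation R: ring R using lm_ring[OF lm] .
interpretation M: abelian_group M using lm_ag[OF lm] .

lemma smult_closed': "a \<in> carrier R \<Longrightarrow> x \<in> carrier M \<Longrightarrow> a \<odot>\<^bsub>M\<^esub> x \<in> carrier M"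
  using lm_ax[OF lm] by (simp add: module_axioms_def)
lemma smult_l_distr': "a \<in> carrier R \<Longrightarrow> b \<in> carrier R \<Longrightarrow> x \<in> carrier M \<Longrightarrow>
   (a \<oplus>\<^bsub>R\<^esub> b) \<odot>\<^bsub>M\<^esub> x = a \<odot>\<^bsub>M\<^esub> x \<oplus>\<^bsub>M\<^esub> b \<odot>\<^bsub>M\<^esub> x"
  using lm_ax[OF lm] by (simp add: module_axioms_def)
lemma smult_r_distr': "a \<in> carrier R \<Longrightarrow> x \<in> carrier M \<Longrightarrow> y \<in> carrier M \<Longrightarrow>
   a \<odot>\<^bsub>M\<^esub> (x \<oplus>\<^bsub>M\<^esub> y) = a \<odot>\<^bsub>M\<^esub> x \<oplus>\<^bsub>M\<^esub> a \<odot>\<^bsub>M\<^esub> y"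
  using lm_ax[OF lm] by (simp add: module_axioms_def)
lemma smult_assoc1': "a \<in> carrier R \<Longrightarrow> b \<in> carrier R \<Longrightarrow> x \<in> carrier M \<Longrightarrow>
   (a \<otimes>\<^bsub>R\<^esub> b) \<odot>\<^bsub>M\<^esub> x = a \<odot>\<^bsub>M\<^esub> (b \<odot>\<^bsub>M\<^esub> x)"
  using lm_ax[OF lm] by (simp add: module_axioms_def)
lemma smult_one': "x \<in> carrier M \<Longrightarrow> \<one>\<^bsub>R\<^esub> \<odot>\<^bsub>M\<^esub> x = x"
  using lm_ax[OF lm] by (simp add: module_axioms_def)

lemma smult_zero': "a \<in> carrier R \<Longrightarrow> a \<odot>\<^bsub>M\<^esub> \<zero>\<^bsub>M\<^esub> = \<zero>\<^bsub>M\<^esub>"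
proof -
  assume a: "a \<in> carrier R"
  have c: "a \<odot>\<^bsub>M\<^esub> \<zero>\<^bsub>M\<^esub> \<in> carrier M" using smult_closed'[OF a] by simp
  have "a \<odot>\<^bsub>M\<^esub> \<zero>\<^bsub>M\<^esub> \<oplus>\<^bsub>M\<^esub> a \<odot>\<^bsub>M\<^esub> \<zero>\<^bsub>M\<^esub> = a \<odot>\<^bsub>M\<^esub> \<zero>\<^bsub>M\<^esub> \<oplus>\<^bsub>M\<^esub> \<zero>\<^bsub>M\<^esub>"
    using smult_r_distr'[OF a, of "\<zero>\<^bsub>M\<^esub>" "\<zero>\<^bsub>M\<^esub>"] c by simp
  then show ?thesis using c by simp
qed

lemma zero_smult': "x \<in> carrier M \<Longrightarrow> \<zero>\<^bsub>R\<^esub> \<odot>\<^bsub>M\<^esub> x = \<zero>\<^bsub>M\<^esub>"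
proof -
  assume x: "x \<in> carrier M"
  have c: "\<zero>\<^bsub>R\<^esub> \<odot>\<^bsub>M\<^esub> x \<in> carrier M" using smult_closed'[OF _ x] by simp
  have "\<zero>\<^bsub>R\<^esub> \<odot>\<^bsub>M\<^esub> x \<oplus>\<^bsub>M\<^esub> \<zero>\<^bsub>R\<^esub> \<odot>\<^bsub>M\<^esub> x = \<zero>\<^bsub>R\<^esub> \<odot>\<^bsub>M\<^esub> x \<oplus>\<^bsub>M\<^esub> \<zero>\<^bsub>M\<^esub>"
    using smult_l_distr'[OF _ _ x, of "\<zero>\<^bsub>R\<^esub>" "\<zero>\<^bsub>R\<^esub>"] c by simp
  then show ?thesis using c by simp
qed

lemma smult_finsum': "finite A \<Longrightarrow> a \<in> carrier R \<Longrightarrow> g \<in> A \<rightarrow> carrier M \<Longrightarrow>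
   a \<odot>\<^bsub>M\<^esub> finsum M g A = finsum M (\<lambda>i. a \<odot>\<^bsub>M\<^esub> g i) A"
proof (induction A rule: finite_induct)
  case empty then show ?case by (simp add: smult_zero')
next
  case (insert x F)
  then show ?case by (simp add: smult_r_distr' smult_closed' Pi_def)
qed

end

lemma lm_closed: "left_module R M \<Longrightarrow> a \<in> carrier R \<Longrightarrow> x \<in> carrier M \<Longrightarrow> a \<odot>\<^bsub>M\<^esub> x \<in> carrier M"
  by (rule smult_closed')

context
  fixes R :: "'r ring" and M :: "('r,'a) module" and N :: "('r,'b) module" and f
  assumes lmM: "left_module R M" and lmN: "left_module R N" and hf: "f \<in> lmod_hom R M N"
begin

interpretation R: ring R using lm_ring[OF lmM] .
interpretation M: abelian_group M using lm_ag[OF lmM] .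
interpretation N: abelian_group N using lm_ag[OF lmN] .

lemma hom_closed: "x \<in> carrier M \<Longrightarrow> f x \<in> carrier N"
  using hf by (simp add: lmod_hom_def)
lemma hom_add: "x \<in> carrier M \<Longrightarrow> y \<in> carrier M \<Longrightarrow> f (x \<oplus>\<^bsub>M\<^esub> y) = f x \<oplus>\<^bsub>N\<^esub> f y"
  using hf by (simp add: lmod_hom_def)
lemma hom_smult: "a \<in> carrier R \<Longrightarrow> x \<in> carrier M \<Longrightarrow> f (a \<odot>\<^bsub>M\<^esub> x) = a \<odot>\<^bsub>N\<^esub> f x"
  using hf by (simp add: lmod_hom_def)
lemma hom_zero: "f \<zero>\<^bsub>M\<^esub> = \<zero>\<^bsub>N\<^esub>"
proof -
  have c: "f \<zero>\<^bsub>M\<^esub> \<in> carrier N" by (simp add: hom_closed)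
  have "f \<zero>\<^bsub>M\<^esub> \<oplus>\<^bsub>N\<^esub> f \<zero>\<^bsub>M\<^esub> = f \<zero>\<^bsub>M\<^esub> \<oplus>\<^bsub>N\<^esub> \<zero>\<^bsub>N\<^esub>"
    using hom_add[of "\<zero>\<^bsub>M\<^esub>" "\<zero>\<^bsub>M\<^esub>"] c by simp
  then show ?thesis using c by simp
qed
lemma hom_neg: "x \<in> carrier M \<Longrightarrow> f (\<ominus>\<^bsub>M\<^esub> x) = \<ominus>\<^bsub>N\<^esub> f x"
proof -
  assume x: "x \<in> carrier M"
  have "f (\<ominus>\<^bsub>M\<^esub> x) \<oplus>\<^bsub>N\<^esub> f x = \<zero>\<^bsub>N\<^esub>"
    using hom_add[of "\<ominus>\<^bsub>M\<^esub> x" x] x hom_zero by (simp add: M.l_neg)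
  then show ?thesis using x hom_closed by (simp add: N.minus_equality)
qed
lemma hom_minus: "x \<in> carrier M \<Longrightarrow> y \<in> carrier M \<Longrightarrow> f (x \<ominus>\<^bsub>M\<^esub> y) = f x \<ominus>\<^bsub>N\<^esub> f y"
  by (simp add: a_minus_def hom_add hom_neg)
lemma hom_finsum: "finite A \<Longrightarrow> g \<in> A \<rightarrow> carrier M \<Longrightarrow> f (finsum M g A) = finsum N (f \<circ> g) A"
proof (induction A rule: finite_induct)
  case empty then show ?case by (simp add: hom_zero)
next
  case (insert x F)
  then have "g \<in> F \<rightarrow> carrier M" "g x \<in> carrier M" by auto
  then show ?case using insert by (simp add: hom_add hom_closed Pi_def)
qed
end

lemma hom_comp: "f \<in> lmod_hom R M N \<Longrightarrow> g \<in> lmod_hom R N K \<Longrightarrow> (\<lambda>x. g (f x)) \<in> lmod_hom R M K"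
  by (simp add: lmod_hom_def)

section \<open>Free modules\<close>

lemma free_mod_simps:
  "carrier (free_mod R X) = {f. (\<forall>x. f x \<in> carrier R) \<and> finite {x. f x \<noteq> \<zero>\<^bsub>R\<^esub>} \<and> {x. f x \<noteq> \<zero>\<^bsub>R\<^esub>} \<subseteq> X}"
  "zero (free_mod R X) = (\<lambda>x. \<zero>\<^bsub>R\<^esub>)"
  "add (free_mod R X) = (\<lambda>f g x. f x \<oplus>\<^bsub>R\<^esub> g x)"
  "smult (free_mod R X) = (\<lambda>a f x. a \<otimes>\<^bsub>R\<^esub> f x)"
  by (simp_all add: free_mod_def)

context
  fixes R :: "'r ring" and X :: "'p set"
  assumes rR: "ring R"
begin
interpretation R: ring R by (rule rR)

lemma free_add_closed:
  assumes "f \<in> carrier (free_mod R X)" "g \<in> carrier (free_mod R X)"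
  shows "(\<lambda>x. f x \<oplus>\<^bsub>R\<^esub> g x) \<in> carrier (free_mod R X)"
proof -
  have "{x. f x \<oplus>\<^bsub>R\<^esub> g x \<noteq> \<zero>\<^bsub>R\<^esub>} \<subseteq> {x. f x \<noteq> \<zero>\<^bsub>R\<^esub>} \<union> {x. g x \<noteq> \<zero>\<^bsub>R\<^esub>}"
    using assms by (auto simp: free_mod_simps)
  then show ?thesis using assms by (auto simp: free_mod_simps intro: finite_subset)
qed

lemma free_smult_closed:
  assumes "a \<in> carrier R" "f \<in> carrier (free_mod R X)"
  shows "(\<lambda>x. a \<otimes>\<^bsub>R\<^esub> f x) \<in> carrier (free_mod R X)"
proof -
  have "{x. a \<otimes>\<^bsub>R\<^esub> f x \<noteq> \<zero>\<^bsub>R\<^esub>} \<subseteq> {x. f x \<noteq> \<zero>\<^bsub>R\<^esub>}"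
    using assms by (auto simp: free_mod_simps)
  then show ?thesis using assms by (auto simp: free_mod_simps intro: finite_subset)
qed

lemma free_neg_closed:
  assumes "f \<in> carrier (free_mod R X)"
  shows "(\<lambda>x. \<ominus>\<^bsub>R\<^esub> f x) \<in> carrier (free_mod R X)"
proof -
  have "{x. \<ominus>\<^bsub>R\<^esub> f x \<noteq> \<zero>\<^bsub>R\<^esub>} = {x. f x \<noteq> \<zero>\<^bsub>R\<^esub>}"
    using assms by (auto simp: free_mod_simps R.a_inv_closed)
  then show ?thesis using assms by (auto simp: free_mod_simps)
qed

lemma free_mod_lm: "left_module R (free_mod R X)"
  unfolding left_module_def
proof (intro conjI)
  show "ring R" by (rule rR)
  show "abelian_group (free_mod R X)"
  proof (rule abelian_groupI)
    show "\<And>f g. f \<in> carrier (free_mod R X) \<Longrightarrow> g \<in> carrier (free_mod R X) \<Longrightarrow>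
      f \<oplus>\<^bsub>free_mod R X\<^esub> g \<in> carrier (free_mod R X)"
      using free_add_closed by (simp add: free_mod_simps)
    show "\<zero>\<^bsub>free_mod R X\<^esub> \<in> carrier (free_mod R X)" by (simp add: free_mod_simps)
    show "\<And>f g h. f \<in> carrier (free_mod R X) \<Longrightarrow> g \<in> carrier (free_mod R X) \<Longrightarrow> h \<in> carrier (free_mod R X) \<Longrightarrow>
      f \<oplus>\<^bsub>free_mod R X\<^esub> g \<oplus>\<^bsub>free_mod R X\<^esub> h = f \<oplus>\<^bsub>free_mod R X\<^esub> (g \<oplus>\<^bsub>free_mod R X\<^esub> h)"
      unfolding free_mod_simps by (rule ext) (simp add: R.a_assoc)
    show "\<And>f g. f \<in> carrier (free_mod R X) \<Longrightarrow> g \<in> carrier (free_mod R X) \<Longrightarrow>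
      f \<oplus>\<^bsub>free_mod R X\<^esub> g = g \<oplus>\<^bsub>free_mod R X\<^esub> f"
      unfolding free_mod_simps by (rule ext) (simp add: R.a_comm)
    show "\<And>f. f \<in> carrier (free_mod R X) \<Longrightarrow> \<zero>\<^bsub>free_mod R X\<^esub> \<oplus>\<^bsub>free_mod R X\<^esub> f = f"
      unfolding free_mod_simps by (rule ext) simp
    fix f assume f: "f \<in> carrier (free_mod R X)"
    show "\<exists>y\<in>carrier (free_mod R X). y \<oplus>\<^bsub>free_mod R X\<^esub> f = \<zero>\<^bsub>free_mod R X\<^esub>"
    proof (rule bexI[of _ "\<lambda>x. \<ominus>\<^bsub>R\<^esub> f x"])
      show "(\<lambda>x. \<ominus>\<^bsub>R\<^esub> f x) \<in> carrier (free_mod R X)" by (rule free_neg_closed[OF f])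
      show "(\<lambda>x. \<ominus>\<^bsub>R\<^esub> f x) \<oplus>\<^bsub>free_mod R X\<^esub> f = \<zero>\<^bsub>free_mod R X\<^esub>"
        using f unfolding free_mod_simps by (intro ext) (simp add: R.l_neg)
    qed
  qed
  show "module_axioms R (free_mod R X)"
    unfolding module_axioms_def
    using free_smult_closed free_add_closed
    by (auto simp: free_mod_simps R.l_distr R.r_distr R.m_assoc intro!: ext)
qed

end

section \<open>Linear extension from a basis\<close>

definition lin :: "'r ring \<Rightarrow> ('r,'a) module \<Rightarrow> ('p \<Rightarrow> 'a) \<Rightarrow> ('p \<Rightarrow> 'r) \<Rightarrow> 'a" where
  "lin R N h c = finsum N (\<lambda>x. c x \<odot>\<^bsub>N\<^esub> h x) {x. c x \<noteq> \<zero>\<^bsub>R\<^esub>}"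

definition delta :: "'r ring \<Rightarrow> 'p \<Rightarrow> 'p \<Rightarrow> 'r" where
  "delta R y = (\<lambda>x. if x = y then \<one>\<^bsub>R\<^esub> else \<zero>\<^bsub>R\<^esub>)"

lemma delta_in: "ring R \<Longrightarrow> y \<in> X \<Longrightarrow> delta R y \<in> carrier (free_mod R X)"
proof -
  assume r: "ring R" and y: "y \<in> X"
  interpret R: ring R by (rule r)
  have "{x. delta R y x \<noteq> \<zero>\<^bsub>R\<^esub>} \<subseteq> {y}" by (auto simp: delta_def)
  then show ?thesis using y by (auto simp: free_mod_simps delta_def intro: finite_subset)
qed

lemma lin_superset:
  assumes r: "ring R" and lm: "left_module R N" and c: "c \<in> carrier (free_mod R X)"
    and S: "finite S" "{x. c x \<noteq> \<zero>\<^bsub>R\<^esub>} \<subseteq> S" "S \<subseteq> X" and h: "h \<in> X \<rightarrow> carrier N"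
  shows "lin R N h c = finsum N (\<lambda>x. c x \<odot>\<^bsub>N\<^esub> h x) S"
proof -
  interpret R: ring R by (rule r)
  interpret N: abelian_group N by (rule lm_ag[OF lm])
  show ?thesis unfolding lin_def
    apply (rule N.add.finprod_mono_neutral_cong_left)
    using S c h by (auto simp: free_mod_simps zero_smult'[OF lm] smult_closed'[OF lm] Pi_def)
qed

lemma lin_hom:
  assumes r: "ring R" and lm: "left_module R N" and h: "h \<in> X \<rightarrow> carrier N"
  shows "lin R N h \<in> lmod_hom R (free_mod R X) N"
proof -
  interpret R: ring R by (rule r)
  interpret N: abelian_group N by (rule lm_ag[OF lm])
  have hc: "\<And>x. x \<in> X \<Longrightarrow> h x \<in> carrier N" using h by auto
  have fin: "\<And>c. c \<in> carrier (free_mod R X) \<Longrightarrow> finite {x. c x \<noteq> \<zero>\<^bsub>R\<^esub>} \<and> {x. c x \<noteq> \<zero>\<^bsub>R\<^esub>} \<subseteq> X \<and> (\<forall>x. c x \<in> carrier R)"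
    by (simp add: free_mod_simps)
  show ?thesis unfolding lmod_hom_def
  proof (intro CollectI conjI ballI)
    fix c assume c: "c \<in> carrier (free_mod R X)"
    show "lin R N h c \<in> carrier N" unfolding lin_def
      using fin[OF c] hc by (intro N.finsum_closed) (auto simp: Pi_def smult_closed'[OF lm])
  next
    fix c d assume c: "c \<in> carrier (free_mod R X)" and d: "d \<in> carrier (free_mod R X)"
    define S where "S = {x. c x \<noteq> \<zero>\<^bsub>R\<^esub>} \<union> {x. d x \<noteq> \<zero>\<^bsub>R\<^esub>}"
    have S: "finite S" "S \<subseteq> X" using fin[OF c] fin[OF d] by (auto simp: S_def)
    have cd: "c \<oplus>\<^bsub>free_mod R X\<^esub> d \<in> carrier (free_mod R X)"
      using c d free_mod_lm[OF r] lm_ag by (metis abelian_groupE(1))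
    have "{x. (c \<oplus>\<^bsub>free_mod R X\<^esub> d) x \<noteq> \<zero>\<^bsub>R\<^esub>} \<subseteq> S"
      using c d by (auto simp: S_def free_mod_simps)
    then have "lin R N h (c \<oplus>\<^bsub>free_mod R X\<^esub> d) = finsum N (\<lambda>x. (c x \<oplus>\<^bsub>R\<^esub> d x) \<odot>\<^bsub>N\<^esub> h x) S"
      using lin_superset[OF r lm cd S(1) _ S(2) h] by (simp add: free_mod_simps)
    also have "\<dots> = finsum N (\<lambda>x. c x \<odot>\<^bsub>N\<^esub> h x \<oplus>\<^bsub>N\<^esub> d x \<odot>\<^bsub>N\<^esub> h x) S"
      using fin[OF c] fin[OF d] S hc
      by (intro N.add.finprod_cong') (auto simp: smult_l_distr'[OF lm] smult_closed'[OF lm])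
    also have "\<dots> = finsum N (\<lambda>x. c x \<odot>\<^bsub>N\<^esub> h x) S \<oplus>\<^bsub>N\<^esub> finsum N (\<lambda>x. d x \<odot>\<^bsub>N\<^esub> h x) S"
      using fin[OF c] fin[OF d] S hc
      by (intro N.finsum_addf) (auto simp: smult_closed'[OF lm])
    also have "\<dots> = lin R N h c \<oplus>\<^bsub>N\<^esub> lin R N h d"
      using lin_superset[OF r lm c S(1) _ S(2) h] lin_superset[OF r lm d S(1) _ S(2) h]
      by (simp add: S_def)
    finally show "lin R N h (c \<oplus>\<^bsub>free_mod R X\<^esub> d) = lin R N h c \<oplus>\<^bsub>N\<^esub> lin R N h d" .
  next
    fix a c assume a: "a \<in> carrier R" and c: "c \<in> carrier (free_mod R X)"
    define S where "S = {x. c x \<noteq> \<zero>\<^bsub>R\<^esub>}"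
    have S: "finite S" "S \<subseteq> X" using fin[OF c] by (auto simp: S_def)
    have ac: "a \<odot>\<^bsub>free_mod R X\<^esub> c \<in> carrier (free_mod R X)"
      using smult_closed'[OF free_mod_lm[OF r] a c] .
    have "{x. (a \<odot>\<^bsub>free_mod R X\<^esub> c) x \<noteq> \<zero>\<^bsub>R\<^esub>} \<subseteq> S"
      using a c by (auto simp: S_def free_mod_simps)
    then have "lin R N h (a \<odot>\<^bsub>free_mod R X\<^esub> c) = finsum N (\<lambda>x. (a \<otimes>\<^bsub>R\<^esub> c x) \<odot>\<^bsub>N\<^esub> h x) S"
      using lin_superset[OF r lm ac S(1) _ S(2) h] by (simp add: free_mod_simps)
    also have "\<dots> = finsum N (\<lambda>x. a \<odot>\<^bsub>N\<^esub> (c x \<odot>\<^bsub>N\<^esub> h x)) S"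
      using fin[OF c] S hc a
      by (intro N.add.finprod_cong') (auto simp: smult_assoc1'[OF lm] smult_closed'[OF lm])
    also have "\<dots> = a \<odot>\<^bsub>N\<^esub> finsum N (\<lambda>x. c x \<odot>\<^bsub>N\<^esub> h x) S"
      using fin[OF c] S hc a
      by (intro smult_finsum'[OF lm, symmetric]) (auto simp: smult_closed'[OF lm])
    also have "\<dots> = a \<odot>\<^bsub>N\<^esub> lin R N h c" by (simp add: lin_def S_def)
    finally show "lin R N h (a \<odot>\<^bsub>free_mod R X\<^esub> c) = a \<odot>\<^bsub>N\<^esub> lin R N h c" .
  qed
qed

lemma supp_Pi:
  assumes lm: "left_module R N" and c: "c \<in> carrier (free_mod R X)" and h: "h \<in> X \<rightarrow> carrier N"
  shows "(\<lambda>x. c x \<odot>\<^bsub>N\<^esub> h x) \<in> {x. c x \<noteq> \<zero>\<^bsub>R\<^esub>} \<rightarrow> carrier N"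
  using c h by (auto simp: free_mod_simps intro!: smult_closed'[OF lm])

lemma lin_cong:
  assumes r: "ring R" and lm: "left_module R N" and c: "c \<in> carrier (free_mod R X)"
    and h': "h' \<in> X \<rightarrow> carrier N" and eq: "\<And>x. x \<in> X \<Longrightarrow> h x = h' x"
  shows "lin R N h c = lin R N h' c"
proof -
  interpret R: ring R by (rule r)
  interpret N: abelian_group N by (rule lm_ag[OF lm])
  show ?thesis unfolding lin_def
    using c h' eq supp_Pi[OF lm c h'] by (intro N.add.finprod_cong') (auto simp: free_mod_simps)
qed

lemma lin_comp:
  assumes r: "ring R" and lm: "left_module R N" and lm': "left_module R N'"
    and phi: "\<phi> \<in> lmod_hom R N N'" and h: "h \<in> X \<rightarrow> carrier N" and c: "c \<in> carrier (free_mod R X)"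
  shows "\<phi> (lin R N h c) = lin R N' (\<lambda>x. \<phi> (h x)) c"
proof -
  interpret R: ring R by (rule r)
  interpret N: abelian_group N by (rule lm_ag[OF lm])
  interpret N': abelian_group N' by (rule lm_ag[OF lm'])
  have fin: "finite {x. c x \<noteq> \<zero>\<^bsub>R\<^esub>}" "{x. c x \<noteq> \<zero>\<^bsub>R\<^esub>} \<subseteq> X" "\<And>x. c x \<in> carrier R"
    using c by (auto simp: free_mod_simps)
  have phx: "(\<lambda>x. \<phi> (h x)) \<in> X \<rightarrow> carrier N'" using h hom_closed[OF lm lm' phi] by auto
  have fx: "\<And>x. c x \<noteq> \<zero>\<^bsub>R\<^esub> \<Longrightarrow> h x \<in> carrier N" using fin h by auto
  have "\<phi> (lin R N h c) = finsum N' (\<phi> \<circ> (\<lambda>x. c x \<odot>\<^bsub>N\<^esub> h x)) {x. c x \<noteq> \<zero>\<^bsub>R\<^esub>}"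
    unfolding lin_def using fin h supp_Pi[OF lm c h]
    by (intro hom_finsum[OF lm lm' phi]) auto
  also have "\<dots> = finsum N' (\<lambda>x. c x \<odot>\<^bsub>N'\<^esub> \<phi> (h x)) {x. c x \<noteq> \<zero>\<^bsub>R\<^esub>}"
    using supp_Pi[OF lm' c phx] fx fin(3)
    by (intro N'.add.finprod_cong') (auto simp: hom_smult[OF lm lm' phi])
  also have "\<dots> = lin R N' (\<lambda>x. \<phi> (h x)) c" unfolding lin_def by simp
  finally show ?thesis .
qed

lemma lin_delta:
  assumes r: "ring R" and lm: "left_module R N" and y: "y \<in> X" and h: "h \<in> X \<rightarrow> carrier N"
  shows "lin R N h (delta R y) = h y"
proof -
  interpret R: ring R by (rule r)
  interpret N: abelian_group N by (rule lm_ag[OF lm])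
  have hy: "h y \<in> carrier N" using y h by auto
  have "lin R N h (delta R y) = finsum N (\<lambda>x. delta R y x \<odot>\<^bsub>N\<^esub> h x) {y}"
    using y by (intro lin_superset[OF r lm delta_in[OF r y]]) (auto simp: delta_def h)
  also have "\<dots> = (\<lambda>x. delta R y x \<odot>\<^bsub>N\<^esub> h x) y \<oplus>\<^bsub>N\<^esub> finsum N (\<lambda>x. delta R y x \<odot>\<^bsub>N\<^esub> h x) {}"
    using y h hy smult_closed'[OF lm R.one_closed hy] by (intro N.finsum_insert) (auto simp: delta_def)
  also have "\<dots> = h y" using y h smult_closed'[OF lm R.one_closed hy] hy
    by (auto simp: delta_def smult_one'[OF lm])
  finally show ?thesis .
qed

lemma free_finsum_apply:
  assumes r: "ring R" and S: "finite S" and G: "G \<in> S \<rightarrow> carrier (free_mod R X)"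
  shows "finsum (free_mod R X) G S y = finsum R (\<lambda>i. G i y) S"
proof -
  interpret R: ring R by (rule r)
  interpret F: abelian_group "free_mod R X" by (rule lm_ag[OF free_mod_lm[OF r]])
  show ?thesis
  using S G
proof (induction S rule: finite_induct)
  case empty
  then show ?case by (simp add: free_mod_simps)
next
  case (insert x F)
  have GF: "G \<in> F \<rightarrow> carrier (free_mod R X)" "G x \<in> carrier (free_mod R X)" using insert by auto
  then have "\<And>i. i \<in> F \<Longrightarrow> G i y \<in> carrier R" "G x y \<in> carrier R" by (auto simp: free_mod_simps)
  then show ?case using insert GF by (simp add: free_mod_simps Pi_def)
qed
qed

lemma lin_delta_self:
  assumes r: "ring R" and c: "c \<in> carrier (free_mod R X)"
  shows "lin R (free_mod R X) (delta R) c = c"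
proof (rule ext)
  fix y
  interpret R: ring R by (rule r)
  have fin: "finite {x. c x \<noteq> \<zero>\<^bsub>R\<^esub>}" "{x. c x \<noteq> \<zero>\<^bsub>R\<^esub>} \<subseteq> X" "\<And>x. c x \<in> carrier R"
    using c by (auto simp: free_mod_simps)
  have G: "(\<lambda>x. c x \<odot>\<^bsub>free_mod R X\<^esub> delta R x) \<in> {x. c x \<noteq> \<zero>\<^bsub>R\<^esub>} \<rightarrow> carrier (free_mod R X)"
    using fin by (auto intro!: smult_closed'[OF free_mod_lm[OF r]] delta_in[OF r])
  have "lin R (free_mod R X) (delta R) c y = finsum R (\<lambda>i. c i \<otimes>\<^bsub>R\<^esub> delta R i y) {x. c x \<noteq> \<zero>\<^bsub>R\<^esub>}"
    unfolding lin_def using free_finsum_apply[OF r fin(1) G] by (simp add: free_mod_simps)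
  also have "\<dots> = finsum R (\<lambda>i. if y = i then c i else \<zero>\<^bsub>R\<^esub>) {x. c x \<noteq> \<zero>\<^bsub>R\<^esub>}"
    using fin by (intro R.add.finprod_cong') (auto simp: delta_def)
  also have "\<dots> = c y"
  proof (cases "c y = \<zero>\<^bsub>R\<^esub>")
    case True
    then have "finsum R (\<lambda>i. if y = i then c i else \<zero>\<^bsub>R\<^esub>) {x. c x \<noteq> \<zero>\<^bsub>R\<^esub>} = finsum R (\<lambda>i. \<zero>\<^bsub>R\<^esub>) {x. c x \<noteq> \<zero>\<^bsub>R\<^esub>}"
      by (intro R.add.finprod_cong') auto
    then show ?thesis using True by simp
  next
    case False
    then show ?thesis using fin by (intro R.add.finprod_singleton) auto
  qed
  finally show "lin R (free_mod R X) (delta R) c y = c y" .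
qed

lemma hom_eq_lin:
  assumes r: "ring R" and lm: "left_module R N" and phi: "\<phi> \<in> lmod_hom R (free_mod R X) N"
    and c: "c \<in> carrier (free_mod R X)"
  shows "\<phi> c = lin R N (\<lambda>x. \<phi> (delta R x)) c"
proof -
  have "\<phi> c = \<phi> (lin R (free_mod R X) (delta R) c)" using lin_delta_self[OF r c] by simp
  also have "\<dots> = lin R N (\<lambda>x. \<phi> (delta R x)) c"
    using delta_in[OF r] by (intro lin_comp[OF r free_mod_lm[OF r] lm phi _ c]) auto
  finally show ?thesis .
qed

lemma proj_lift:
  fixes P :: "('r,'p) module"
  assumes r: "ring R" and P: "projective_mod R P" and lmN: "left_module R N" and lmT: "left_module R T"
    and phi: "\<phi> \<in> lmod_hom R N T" and beta: "\<beta> \<in> lmod_hom R P T"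
    and im: "\<And>p. p \<in> carrier P \<Longrightarrow> \<beta> p \<in> \<phi> ` carrier N"
  shows "\<exists>\<gamma>\<in>lmod_hom R P N. \<forall>p\<in>carrier P. \<phi> (\<gamma> p) = \<beta> p"
proof -
  have lmP: "left_module R P" using P by (simp add: projective_mod_def)
  obtain X :: "'p set" and \<pi> \<sigma> where pi: "\<pi> \<in> lmod_hom R (free_mod R X) P" and sigma: "\<sigma> \<in> lmod_hom R P (free_mod R X)"
    and ps: "\<forall>x\<in>carrier P. \<pi> (\<sigma> x) = x"
    using P unfolding projective_mod_def by blast
  have lmF: "left_module R (free_mod R X)" by (rule free_mod_lm[OF r])
  define y where "y x = (SOME y. y \<in> carrier N \<and> \<phi> y = \<beta> (\<pi> (delta R x)))" for x
  have yp: "y x \<in> carrier N \<and> \<phi> (y x) = \<beta> (\<pi> (delta R x))" if x: "x \<in> X" for x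
  proof -
    have "\<pi> (delta R x) \<in> carrier P" using hom_closed[OF lmF lmP pi delta_in[OF r x]] .
    then have "\<beta> (\<pi> (delta R x)) \<in> \<phi> ` carrier N" by (rule im)
    then have "\<exists>y. y \<in> carrier N \<and> \<phi> y = \<beta> (\<pi> (delta R x))" by auto
    then show ?thesis unfolding y_def by (rule someI_ex)
  qed
  have yX: "y \<in> X \<rightarrow> carrier N" using yp by auto
  have bpi: "(\<lambda>c. \<beta> (\<pi> c)) \<in> lmod_hom R (free_mod R X) T" by (rule hom_comp[OF pi beta])
  show ?thesis
  proof (intro bexI ballI)
    show "(\<lambda>p. lin R N y (\<sigma> p)) \<in> lmod_hom R P N"
      by (rule hom_comp[OF sigma lin_hom[OF r lmN yX]])
    fix p assume p: "p \<in> carrier P"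
    have sp: "\<sigma> p \<in> carrier (free_mod R X)" by (rule hom_closed[OF lmP lmF sigma p])
    have "\<phi> (lin R N y (\<sigma> p)) = lin R T (\<lambda>x. \<phi> (y x)) (\<sigma> p)"
      by (rule lin_comp[OF r lmN lmT phi yX sp])
    also have "\<dots> = lin R T (\<lambda>x. \<beta> (\<pi> (delta R x))) (\<sigma> p)"
      using yp hom_closed[OF lmP lmT beta hom_closed[OF lmF lmP pi delta_in[OF r]]]
      by (intro lin_cong[OF r lmT sp]) auto
    also have "\<dots> = \<beta> (\<pi> (\<sigma> p))" using hom_eq_lin[OF r lmT bpi sp] by simp
    also have "\<dots> = \<beta> p" using ps p by simp
    finally show "\<phi> (lin R N y (\<sigma> p)) = \<beta> p" .
  qed
qed


lemma smult_neg':
  assumes lm: "left_module R M" and a: "a \<in> carrier R" and v: "v \<in> carrier M"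
  shows "a \<odot>\<^bsub>M\<^esub> (\<ominus>\<^bsub>M\<^esub> v) = \<ominus>\<^bsub>M\<^esub> (a \<odot>\<^bsub>M\<^esub> v)"
proof -
  interpret M: abelian_group M by (rule lm_ag[OF lm])
  have "a \<odot>\<^bsub>M\<^esub> (\<ominus>\<^bsub>M\<^esub> v) \<oplus>\<^bsub>M\<^esub> a \<odot>\<^bsub>M\<^esub> v = \<zero>\<^bsub>M\<^esub>"
    using v a by (simp add: smult_r_distr'[OF lm, symmetric] M.l_neg smult_zero'[OF lm])
  then show ?thesis using a v smult_closed'[OF lm] by (simp add: M.minus_equality)
qed

lemma hom_diff:
  assumes lmM: "left_module R M" and lmN: "left_module R N"
    and f1: "f1 \<in> lmod_hom R M N" and f2: "f2 \<in> lmod_hom R M N"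
  shows "(\<lambda>x. f1 x \<ominus>\<^bsub>N\<^esub> f2 x) \<in> lmod_hom R M N"
proof -
  interpret N: abelian_group N by (rule lm_ag[OF lmN])
  note c1 = hom_closed[OF lmM lmN f1] and c2 = hom_closed[OF lmM lmN f2]
  show ?thesis unfolding lmod_hom_def
  proof (intro CollectI conjI ballI)
    fix x assume x: "x \<in> carrier M"
    show "f1 x \<ominus>\<^bsub>N\<^esub> f2 x \<in> carrier N" using c1[OF x] c2[OF x] by simp
  next
    fix x y assume x: "x \<in> carrier M" and y: "y \<in> carrier M"
    show "f1 (x \<oplus>\<^bsub>M\<^esub> y) \<ominus>\<^bsub>N\<^esub> f2 (x \<oplus>\<^bsub>M\<^esub> y) = f1 x \<ominus>\<^bsub>N\<^esub> f2 x \<oplus>\<^bsub>N\<^esub> (f1 y \<ominus>\<^bsub>N\<^esub> f2 y)"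
      using c1[OF x] c2[OF x] c1[OF y] c2[OF y]
      by (simp add: hom_add[OF lmM lmN f1 x y] hom_add[OF lmM lmN f2 x y] N.minus_eq N.minus_add N.a_ac)
  next
    fix a x assume a: "a \<in> carrier R" and x: "x \<in> carrier M"
    show "f1 (a \<odot>\<^bsub>M\<^esub> x) \<ominus>\<^bsub>N\<^esub> f2 (a \<odot>\<^bsub>M\<^esub> x) = a \<odot>\<^bsub>N\<^esub> (f1 x \<ominus>\<^bsub>N\<^esub> f2 x)"
      using c1[OF x] c2[OF x] a
      by (simp add: hom_smult[OF lmM lmN f1 a x] hom_smult[OF lmM lmN f2 a x] N.minus_eq
          smult_r_distr'[OF lmN] smult_neg'[OF lmN])
  qed
qed

lemma zero_hom:
  assumes lmM: "left_module R M" and lmN: "left_module R N"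
  shows "(\<lambda>x. \<zero>\<^bsub>N\<^esub>) \<in> lmod_hom R M N"
proof -
  interpret N: abelian_group N by (rule lm_ag[OF lmN])
  show ?thesis unfolding lmod_hom_def using smult_zero'[OF lmN] by auto
qed

lemma hom_cycles_iff:
  "g \<in> lmod_hom R P (cycles C d n) \<longleftrightarrow>
     g \<in> lmod_hom R P (C n) \<and> (\<forall>p\<in>carrier P. d n (g p) = \<zero>\<^bsub>C (n - 1)\<^esub>)"
  unfolding lmod_hom_def cycles_def by auto

lemma cx_lm: "is_complex R C d \<Longrightarrow> left_module R (C n)"
  by (simp add: is_complex_def)
lemma cx_hom: "is_complex R C d \<Longrightarrow> d n \<in> lmod_hom R (C n) (C (n - 1))"
  by (simp add: is_complex_def)
lemma cx_hom': "is_complex R C d \<Longrightarrow> d (n + 1) \<in> lmod_hom R (C (n + 1)) (C n)"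
  using cx_hom[of R C d "n + 1"] by simp
lemma cx_dd: "is_complex R C d \<Longrightarrow> x \<in> carrier (C (n + 1)) \<Longrightarrow> d n (d (n + 1) x) = \<zero>\<^bsub>C (n - 1)\<^esub>"
  unfolding is_complex_def by (metis add_diff_cancel_right' diff_diff_eq one_add_one)

section \<open>The inductive step\<close>

lemma step_lemma:
  fixes R :: "'r ring"
    and M :: "int \<Rightarrow> ('r, 'a) module" and dM :: "int \<Rightarrow> 'a \<Rightarrow> 'a"
    and N :: "int \<Rightarrow> ('r, 'b) module" and dN :: "int \<Rightarrow> 'b \<Rightarrow> 'b"
  assumes r: "ring R"
    and cM: "is_complex R M dM"
    and eN: "exact_complex R N dN"
    and hyp: "\<forall>n. \<forall>g\<in>lmod_hom R (M n) (cycles N dN n).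
               \<exists>P :: ('r, 'p) module. projective_mod R P \<and>
                 (\<exists>\<alpha>\<in>lmod_hom R (M n) P. \<exists>\<beta>\<in>lmod_hom R P (cycles N dN n).
                    \<forall>x\<in>carrier (M n). \<beta> (\<alpha> x) = g x)"
    and fc: "chain_map R M dM N dN f"
    and ap: "ap \<in> lmod_hom R (M (n - 1)) (free_mod R (carrier (N n)))"
    and inv: "\<forall>x\<in>carrier (M n). f (n - 1) (dM n x) = dN n (lin R (N n) (\<lambda>x. x) (ap (dM n x)))"
  shows "\<exists>a. a \<in> lmod_hom R (M n) (free_mod R (carrier (N (n + 1)))) \<and>
           (\<forall>x\<in>carrier (M n). f n x = dN (n + 1) (lin R (N (n + 1)) (\<lambda>x. x) (a x))
                \<oplus>\<^bsub>N n\<^esub> lin R (N n) (\<lambda>x. x) (ap (dM n x)))"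
proof -
  have cN: "is_complex R N dN" using eN by (simp add: exact_complex_def)
  have lmM: "\<And>k. left_module R (M k)" using cx_lm[OF cM] .
  have lmN: "\<And>k. left_module R (N k)" using cx_lm[OF cN] .
  have lmF: "\<And>k. left_module R (free_mod R (carrier (N k)))" using free_mod_lm[OF r] .
  interpret Nn: abelian_group "N n" by (rule lm_ag[OF lmN])
  interpret Nn1: abelian_group "N (n - 1)" by (rule lm_ag[OF lmN])
  define eps where "eps k = lin R (N k) (\<lambda>x. x)" for k
  have eps_hom: "\<And>k. eps k \<in> lmod_hom R (free_mod R (carrier (N k))) (N k)"
    unfolding eps_def by (rule lin_hom[OF r lmN]) auto
  have fhom: "\<And>k. f k \<in> lmod_hom R (M k) (N k)" and fcomm: "\<And>k x. x \<in> carrier (M k) \<Longrightarrow> f (k - 1) (dM k x) = dN k (f k x)"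
    using fc by (auto simp: chain_map_def)
  define g where "g x = f n x \<ominus>\<^bsub>N n\<^esub> eps n (ap (dM n x))" for x
  have h1: "(\<lambda>x. eps n (ap (dM n x))) \<in> lmod_hom R (M n) (N n)"
    by (rule hom_comp[OF hom_comp[OF cx_hom[OF cM] ap] eps_hom])
  have ghom: "g \<in> lmod_hom R (M n) (N n)"
    unfolding g_def by (rule hom_diff[OF lmM lmN fhom h1])
  have gcyc: "g \<in> lmod_hom R (M n) (cycles N dN n)"
    unfolding hom_cycles_iff
  proof (intro conjI ballI ghom)
    fix x assume x: "x \<in> carrier (M n)"
    have "dN n (g x) = dN n (f n x) \<ominus>\<^bsub>N (n - 1)\<^esub> dN n (eps n (ap (dM n x)))"
      unfolding g_def
      by (rule hom_minus[OF lmN lmN cx_hom[OF cN] hom_closed[OF lmM lmN fhom x] hom_closed[OF lmM lmN h1 x]])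
    also have "\<dots> = \<zero>\<^bsub>N (n - 1)\<^esub>"
      using inv x fcomm[OF x] hom_closed[OF lmN lmN cx_hom[OF cN] hom_closed[OF lmM lmN fhom x]]
      by (simp add: eps_def Nn1.minus_eq Nn1.r_neg)
    finally show "dN n (g x) = \<zero>\<^bsub>N (n - 1)\<^esub>" .
  qed
  obtain P :: "('r,'p) module" and \<alpha> \<beta> where P: "projective_mod R P" and al: "\<alpha> \<in> lmod_hom R (M n) P"
    and be: "\<beta> \<in> lmod_hom R P (cycles N dN n)" and ab: "\<forall>x\<in>carrier (M n). \<beta> (\<alpha> x) = g x"
    using hyp gcyc by blast
  have lmP: "left_module R P" using P by (simp add: projective_mod_def)
  have be': "\<beta> \<in> lmod_hom R P (N n)" using be hom_cycles_iff by blast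
  have beim: "\<And>p. p \<in> carrier P \<Longrightarrow> \<beta> p \<in> dN (n + 1) ` carrier (N (n + 1))"
  proof -
    fix p assume p: "p \<in> carrier P"
    have "\<beta> p \<in> carrier (cycles N dN n)" using be p by (simp add: lmod_hom_def)
    then show "\<beta> p \<in> dN (n + 1) ` carrier (N (n + 1))" using eN by (simp add: exact_complex_def)
  qed
  obtain \<gamma>1 where g1: "\<gamma>1 \<in> lmod_hom R P (N (n + 1))" and g1e: "\<forall>p\<in>carrier P. dN (n + 1) (\<gamma>1 p) = \<beta> p"
    using proj_lift[OF r P lmN lmN cx_hom'[OF cN] be' beim] by blast
  have im2: "\<And>p. p \<in> carrier P \<Longrightarrow> \<gamma>1 p \<in> eps (n + 1) ` carrier (free_mod R (carrier (N (n + 1))))"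
  proof -
    fix p assume p: "p \<in> carrier P"
    have c: "\<gamma>1 p \<in> carrier (N (n + 1))" by (rule hom_closed[OF lmP lmN g1 p])
    have "eps (n + 1) (delta R (\<gamma>1 p)) = \<gamma>1 p"
      unfolding eps_def using c by (intro lin_delta[OF r lmN]) auto
    then show "\<gamma>1 p \<in> eps (n + 1) ` carrier (free_mod R (carrier (N (n + 1))))"
      using delta_in[OF r c] by (metis image_eqI)
  qed
  obtain \<gamma>2 where g2: "\<gamma>2 \<in> lmod_hom R P (free_mod R (carrier (N (n + 1))))"
    and g2e: "\<forall>p\<in>carrier P. eps (n + 1) (\<gamma>2 p) = \<gamma>1 p"
    using proj_lift[OF r P lmF lmN eps_hom g1 im2] by blast
  show ?thesis
  proof (intro exI conjI ballI)
    show "(\<lambda>x. \<gamma>2 (\<alpha> x)) \<in> lmod_hom R (M n) (free_mod R (carrier (N (n + 1))))"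
      by (rule hom_comp[OF al g2])
    fix x assume x: "x \<in> carrier (M n)"
    have ax: "\<alpha> x \<in> carrier P" by (rule hom_closed[OF lmM lmP al x])
    have "dN (n + 1) (eps (n + 1) (\<gamma>2 (\<alpha> x))) = g x" using g2e g1e ab ax x by simp
    then show "f n x = dN (n + 1) (lin R (N (n + 1)) (\<lambda>x. x) (\<gamma>2 (\<alpha> x))) \<oplus>\<^bsub>N n\<^esub> lin R (N n) (\<lambda>x. x) (ap (dM n x))"
      using hom_closed[OF lmM lmN fhom x] hom_closed[OF lmM lmN h1 x]
      by (simp add: eps_def g_def Nn.minus_eq Nn.a_assoc Nn.l_neg)
  qed
qed




section \<open>The recursion\<close>

lemma exists_a:
  fixes R :: "'r ring"
    and M :: "int \<Rightarrow> ('r, 'a) module" and dM :: "int \<Rightarrow> 'a \<Rightarrow> 'a"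
    and N :: "int \<Rightarrow> ('r, 'b) module" and dN :: "int \<Rightarrow> 'b \<Rightarrow> 'b"
  assumes r: "ring R"
    and cM: "is_complex R M dM" and bb: "bounded_below M"
    and eN: "exact_complex R N dN"
    and hyp: "\<forall>n. \<forall>g\<in>lmod_hom R (M n) (cycles N dN n).
               \<exists>P :: ('r, 'p) module. projective_mod R P \<and>
                 (\<exists>\<alpha>\<in>lmod_hom R (M n) P. \<exists>\<beta>\<in>lmod_hom R P (cycles N dN n).
                    \<forall>x\<in>carrier (M n). \<beta> (\<alpha> x) = g x)"
    and fc: "chain_map R M dM N dN f"
  shows "\<exists>a. (\<forall>n. a n \<in> lmod_hom R (M n) (free_mod R (carrier (N (n + 1))))) \<and>
           (\<forall>n. \<forall>x\<in>carrier (M n). f n x = dN (n + 1) (lin R (N (n + 1)) (\<lambda>x. x) (a n x))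
                \<oplus>\<^bsub>N n\<^esub> lin R (N n) (\<lambda>x. x) (a (n - 1) (dM n x)))"
proof -
  obtain b where b: "\<And>n. n \<le> b \<Longrightarrow> carrier (M n) = {\<zero>\<^bsub>M n\<^esub>}"
    using bb unfolding bounded_below_def by blast
  have cN: "is_complex R N dN" using eN by (simp add: exact_complex_def)
  have lmM: "\<And>k. left_module R (M k)" using cx_lm[OF cM] .
  have lmN: "\<And>k. left_module R (N k)" using cx_lm[OF cN] .
  have lmF: "\<And>k. left_module R (free_mod R (carrier (N k)))" using free_mod_lm[OF r] .
  define eps where "eps k = lin R (N k) (\<lambda>x. x)" for k
  have eps_hom: "\<And>k. eps k \<in> lmod_hom R (free_mod R (carrier (N k))) (N k)"
    unfolding eps_def by (rule lin_hom[OF r lmN]) auto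
  have eps0: "\<And>k. eps k (\<lambda>y. \<zero>\<^bsub>R\<^esub>) = \<zero>\<^bsub>N k\<^esub>"
    using hom_zero[OF lmF lmN eps_hom] by (simp add: free_mod_simps)
  have fhom: "\<And>k. f k \<in> lmod_hom R (M k) (N k)" and fcomm: "\<And>k x. x \<in> carrier (M k) \<Longrightarrow> f (k - 1) (dM k x) = dN k (f k x)"
    using fc by (auto simp: chain_map_def)
  define Inv where "Inv n ap \<longleftrightarrow> ap \<in> lmod_hom R (M (n - 1)) (free_mod R (carrier (N n))) \<and>
     (\<forall>x\<in>carrier (M n). f (n - 1) (dM n x) = dN n (eps n (ap (dM n x))))" for n ap
  define Spec where "Spec n ap a \<longleftrightarrow> a \<in> lmod_hom R (M n) (free_mod R (carrier (N (n + 1)))) \<and>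
     (\<forall>x\<in>carrier (M n). f n x = dN (n + 1) (eps (n + 1) (a x)) \<oplus>\<^bsub>N n\<^esub> eps n (ap (dM n x)))" for n ap a
  have stepE: "Spec n ap (SOME a. Spec n ap a)" if "Inv n ap" for n ap
  proof -
    have "\<exists>a. Spec n ap a"
      using step_lemma[OF r cM eN hyp fc, of ap n] that unfolding Inv_def Spec_def eps_def by blast
    then show ?thesis by (rule someI_ex)
  qed
  have inv_next: "Inv (n + 1) a" if I: "Inv n ap" and S: "Spec n ap a" for n ap a
  proof -
    interpret Nn: abelian_group "N n" by (rule lm_ag[OF lmN])
    have aph: "ap \<in> lmod_hom R (M (n - 1)) (free_mod R (carrier (N n)))" using I by (simp add: Inv_def)
    have ah: "a \<in> lmod_hom R (M n) (free_mod R (carrier (N (n + 1))))" using S by (simp add: Spec_def)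
    show ?thesis unfolding Inv_def
    proof (intro conjI ballI)
      show "a \<in> lmod_hom R (M (n + 1 - 1)) (free_mod R (carrier (N (n + 1))))" using ah by simp
      fix x assume x: "x \<in> carrier (M (n + 1))"
      have y: "dM (n + 1) x \<in> carrier (M n)" by (rule hom_closed[OF lmM lmM cx_hom'[OF cM] x])
      have dd: "dM n (dM (n + 1) x) = \<zero>\<^bsub>M (n - 1)\<^esub>" by (rule cx_dd[OF cM x])
      have "ap (dM n (dM (n + 1) x)) = (\<lambda>y. \<zero>\<^bsub>R\<^esub>)"
        using hom_zero[OF lmM lmF aph] dd by (simp add: free_mod_simps)
      then have "f n (dM (n + 1) x) = dN (n + 1) (eps (n + 1) (a (dM (n + 1) x)))"
        using S y eps0 hom_closed[OF lmN lmN cx_hom'[OF cN] hom_closed[OF lmF lmN eps_hom hom_closed[OF lmM lmF ah y]]]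
        by (simp add: Spec_def)
      then show "f (n + 1 - 1) (dM (n + 1) x) = dN (n + 1) (eps (n + 1) (a (dM (n + 1) x)))" by simp
    qed
  qed
  define z where "z = (\<lambda>(x::'a) (y::'b). \<zero>\<^bsub>R\<^esub>)"
  have zhom: "\<And>n k. z \<in> lmod_hom R (M n) (free_mod R (carrier (N k)))"
    using zero_hom[OF lmM lmF] by (simp add: z_def free_mod_simps)
  define A where "A = rec_nat z (\<lambda>k ap. SOME a. Spec (b + int k + 1) ap a)"
  have A0: "A 0 = z" and AS: "\<And>k. A (Suc k) = (SOME a. Spec (b + int k + 1) (A k) a)"
    by (simp_all add: A_def)
  have IA: "Inv (b + int k + 1) (A k)" for k
  proof (induction k)
    case 0
    show ?case unfolding Inv_def A0
    proof (intro conjI ballI)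
      show "z \<in> lmod_hom R (M (b + int 0 + 1 - 1)) (free_mod R (carrier (N (b + int 0 + 1))))" by (rule zhom)
      fix x assume x: "x \<in> carrier (M (b + int 0 + 1))"
      have "dM (b + 1) x \<in> carrier (M b)" using hom_closed[OF lmM lmM cx_hom'[OF cM], of x b] x by simp
      then have "dM (b + 1) x = \<zero>\<^bsub>M b\<^esub>" using b[of b] by simp
      then show "f (b + int 0 + 1 - 1) (dM (b + int 0 + 1) x) = dN (b + int 0 + 1) (eps (b + int 0 + 1) (z (dM (b + int 0 + 1) x)))"
        using hom_zero[OF lmM lmN fhom] hom_zero[OF lmN lmN cx_hom'[OF cN]] eps0 by (simp add: z_def)
    qed
  next
    case (Suc k)
    have sp: "Spec (b + int k + 1) (A k) (A (Suc k))" using stepE[OF Suc] by (simp add: AS)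
    have e: "b + int k + 1 + 1 = b + int (Suc k) + 1" by simp
    from inv_next[OF Suc sp] show ?case by (simp only: e)
  qed
  have SA: "Spec (b + int k + 1) (A k) (A (Suc k))" for k
    using stepE[OF IA[of k]] by (simp add: AS)
  define a where "a n = (if n \<le> b then z else A (nat (n - b)))" for n
  have repr: "\<exists>j. n = b + int j + 1 \<and> a n = A (Suc j) \<and> a (n - 1) = A j" if "\<not> n \<le> b" for n
  proof -
    define j where "j = nat (n - b - 1)"
    have n: "n = b + int j + 1" using that unfolding j_def by arith
    have j: "nat (n - b) = Suc j" using that unfolding j_def by arith
    have "a (n - 1) = A j"
    proof (cases j)
      case 0 then show ?thesis using n by (simp add: a_def A0)
    next
      case (Suc i)
      have "\<not> n - 1 \<le> b" "nat (n - 1 - b) = j" using n Suc by arith+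
      then show ?thesis by (simp add: a_def)
    qed
    then show ?thesis using n j that by (auto simp: a_def)
  qed
  have H1: "a n \<in> lmod_hom R (M n) (free_mod R (carrier (N (n + 1))))" for n
  proof (cases "n \<le> b")
    case True then show ?thesis by (simp add: a_def zhom)
  next
    case False
    then obtain j where j: "n = b + int j + 1" "a n = A (Suc j)" using repr by blast
    then show ?thesis using SA[of j] by (simp add: Spec_def)
  qed
  have H2: "f n x = dN (n + 1) (eps (n + 1) (a n x)) \<oplus>\<^bsub>N n\<^esub> eps n (a (n - 1) (dM n x))"
    if x: "x \<in> carrier (M n)" for n x
  proof (cases "n \<le> b")
    case True
    interpret Nn: abelian_group "N n" by (rule lm_ag[OF lmN])
    have x0: "x = \<zero>\<^bsub>M n\<^esub>" using b[OF True] x by simp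
    have "a n x = (\<lambda>y. \<zero>\<^bsub>R\<^esub>)" using True by (simp add: a_def z_def)
    moreover have "a (n - 1) (dM n x) = (\<lambda>y. \<zero>\<^bsub>R\<^esub>)"
      using hom_zero[OF lmM lmF H1[of "n - 1"]] hom_zero[OF lmM lmM cx_hom[OF cM]] x0
      by (simp add: free_mod_simps)
    ultimately show ?thesis
      using x0 hom_zero[OF lmM lmN fhom] hom_zero[OF lmN lmN cx_hom'[OF cN]] eps0 by simp
  next
    case False
    then obtain j where j: "n = b + int j + 1" "a n = A (Suc j)" "a (n - 1) = A j" using repr by blast
    then show ?thesis using SA[of j] x by (simp add: Spec_def)
  qed
  show ?thesis using H1 H2 unfolding eps_def by blast
qed


section \<open>Products and free complexes\<close>

lemma prod_mod_simps:
  "carrier (prod_mod A B) = carrier A \<times> carrier B"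
  "zero (prod_mod A B) = (\<zero>\<^bsub>A\<^esub>, \<zero>\<^bsub>B\<^esub>)"
  "add (prod_mod A B) = (\<lambda>u v. (fst u \<oplus>\<^bsub>A\<^esub> fst v, snd u \<oplus>\<^bsub>B\<^esub> snd v))"
  "smult (prod_mod A B) = (\<lambda>a u. (a \<odot>\<^bsub>A\<^esub> fst u, a \<odot>\<^bsub>B\<^esub> snd u))"
  by (simp_all add: prod_mod_def)

lemma prod_mod_lm:
  assumes lA: "left_module R A" and lB: "left_module R B"
  shows "left_module R (prod_mod A B)"
proof -
  interpret A: abelian_group A by (rule lm_ag[OF lA])
  interpret B: abelian_group B by (rule lm_ag[OF lB])
  have ag: "abelian_group (prod_mod A B)"
  proof (rule abelian_groupI)
    show "\<And>x y. x \<in> carrier (prod_mod A B) \<Longrightarrow> y \<in> carrier (prod_mod A B) \<Longrightarrow>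
      x \<oplus>\<^bsub>prod_mod A B\<^esub> y \<in> carrier (prod_mod A B)"
      by (auto simp: prod_mod_simps)
    show "\<zero>\<^bsub>prod_mod A B\<^esub> \<in> carrier (prod_mod A B)" by (simp add: prod_mod_simps)
    show "\<And>x y z. x \<in> carrier (prod_mod A B) \<Longrightarrow> y \<in> carrier (prod_mod A B) \<Longrightarrow> z \<in> carrier (prod_mod A B) \<Longrightarrow>
      x \<oplus>\<^bsub>prod_mod A B\<^esub> y \<oplus>\<^bsub>prod_mod A B\<^esub> z = x \<oplus>\<^bsub>prod_mod A B\<^esub> (y \<oplus>\<^bsub>prod_mod A B\<^esub> z)"
      by (auto simp: prod_mod_simps A.a_assoc B.a_assoc)
    show "\<And>x y. x \<in> carrier (prod_mod A B) \<Longrightarrow> y \<in> carrier (prod_mod A B) \<Longrightarrow>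
      x \<oplus>\<^bsub>prod_mod A B\<^esub> y = y \<oplus>\<^bsub>prod_mod A B\<^esub> x"
      by (auto simp: prod_mod_simps A.a_comm B.a_comm)
    show "\<And>x. x \<in> carrier (prod_mod A B) \<Longrightarrow> \<zero>\<^bsub>prod_mod A B\<^esub> \<oplus>\<^bsub>prod_mod A B\<^esub> x = x"
      by (auto simp: prod_mod_simps)
    fix x assume x: "x \<in> carrier (prod_mod A B)"
    show "\<exists>y\<in>carrier (prod_mod A B). y \<oplus>\<^bsub>prod_mod A B\<^esub> x = \<zero>\<^bsub>prod_mod A B\<^esub>"
      using x by (intro bexI[of _ "(\<ominus>\<^bsub>A\<^esub> fst x, \<ominus>\<^bsub>B\<^esub> snd x)"]) (auto simp: prod_mod_simps A.l_neg B.l_neg)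
  qed
  have ax: "module_axioms R (prod_mod A B)"
    unfolding module_axioms_def
    by (auto simp: prod_mod_simps smult_closed'[OF lA] smult_closed'[OF lB]
        smult_l_distr'[OF lA] smult_l_distr'[OF lB] smult_r_distr'[OF lA] smult_r_distr'[OF lB]
        smult_assoc1'[OF lA] smult_assoc1'[OF lB] smult_one'[OF lA] smult_one'[OF lB])
  show ?thesis using ag ax lm_ring[OF lA] by (simp add: left_module_def)
qed

lemma hom_pair:
  "f1 \<in> lmod_hom R M A \<Longrightarrow> f2 \<in> lmod_hom R M B \<Longrightarrow> (\<lambda>x. (f1 x, f2 x)) \<in> lmod_hom R M (prod_mod A B)"
  by (simp add: lmod_hom_def prod_mod_simps)

lemma hom_prod_map:
  "g1 \<in> lmod_hom R A A' \<Longrightarrow> g2 \<in> lmod_hom R B B' \<Longrightarrow>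
   (\<lambda>p. (g1 (fst p), g2 (snd p))) \<in> lmod_hom R (prod_mod A B) (prod_mod A' B')"
  by (auto simp: lmod_hom_def prod_mod_simps)

lemma hom_sum_prod:
  assumes lA: "left_module R A" and lB: "left_module R B" and lN: "left_module R N"
    and g1: "g1 \<in> lmod_hom R A N" and g2: "g2 \<in> lmod_hom R B N"
  shows "(\<lambda>p. g1 (fst p) \<oplus>\<^bsub>N\<^esub> g2 (snd p)) \<in> lmod_hom R (prod_mod A B) N"
proof -
  interpret N: abelian_group N by (rule lm_ag[OF lN])
  note c1 = hom_closed[OF lA lN g1] and c2 = hom_closed[OF lB lN g2]
  show ?thesis unfolding lmod_hom_def
  proof (intro CollectI conjI ballI)
    fix x assume x: "x \<in> carrier (prod_mod A B)"
    then show "g1 (fst x) \<oplus>\<^bsub>N\<^esub> g2 (snd x) \<in> carrier N" using c1 c2 by (auto simp: prod_mod_simps)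
  next
    fix x y assume x: "x \<in> carrier (prod_mod A B)" and y: "y \<in> carrier (prod_mod A B)"
    then have xx: "fst x \<in> carrier A" "snd x \<in> carrier B" "fst y \<in> carrier A" "snd y \<in> carrier B"
      by (auto simp: prod_mod_simps)
    show "g1 (fst (x \<oplus>\<^bsub>prod_mod A B\<^esub> y)) \<oplus>\<^bsub>N\<^esub> g2 (snd (x \<oplus>\<^bsub>prod_mod A B\<^esub> y)) =
          g1 (fst x) \<oplus>\<^bsub>N\<^esub> g2 (snd x) \<oplus>\<^bsub>N\<^esub> (g1 (fst y) \<oplus>\<^bsub>N\<^esub> g2 (snd y))"
      using xx c1 c2 by (simp add: prod_mod_simps hom_add[OF lA lN g1] hom_add[OF lB lN g2] N.a_ac)
  next
    fix a x assume a: "a \<in> carrier R" and x: "x \<in> carrier (prod_mod A B)"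
    then have xx: "fst x \<in> carrier A" "snd x \<in> carrier B" by (auto simp: prod_mod_simps)
    show "g1 (fst (a \<odot>\<^bsub>prod_mod A B\<^esub> x)) \<oplus>\<^bsub>N\<^esub> g2 (snd (a \<odot>\<^bsub>prod_mod A B\<^esub> x)) =
          a \<odot>\<^bsub>N\<^esub> (g1 (fst x) \<oplus>\<^bsub>N\<^esub> g2 (snd x))"
      using xx c1 c2 a by (simp add: prod_mod_simps hom_smult[OF lA lN g1] hom_smult[OF lB lN g2] smult_r_distr'[OF lN])
  qed
qed

lemma free_cplx_lm: "ring R \<Longrightarrow> left_module R (free_cplx R X n)"
  unfolding free_cplx_def by (intro prod_mod_lm free_mod_lm)

lemma free_cplx_is_complex:
  assumes r: "ring R"
  shows "is_complex R (free_cplx R X) (free_cplx_d R)"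
  unfolding is_complex_def
proof (intro allI conjI ballI)
  interpret R: ring R by (rule r)
  fix n
  show "left_module R (free_cplx R X n)" by (rule free_cplx_lm[OF r])
  show "free_cplx_d R n \<in> lmod_hom R (free_cplx R X n) (free_cplx R X (n - 1))"
    unfolding lmod_hom_def free_cplx_def free_cplx_d_def
    by (auto simp: prod_mod_simps free_mod_simps)
  fix x
  show "free_cplx_d R (n - 1) (free_cplx_d R n x) = \<zero>\<^bsub>free_cplx R X (n - 2)\<^esub>"
    by (simp add: free_cplx_d_def free_cplx_def prod_mod_simps free_mod_simps)
qed

definition ext_e :: "'r ring \<Rightarrow> ('b \<Rightarrow> 'q) \<Rightarrow> ('b \<Rightarrow> 'r) \<Rightarrow> 'q \<Rightarrow> 'r" where
  "ext_e R e a = (\<lambda>q. if q \<in> range e then a (inv_into UNIV e q) else \<zero>\<^bsub>R\<^esub>)"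

lemma pull_hom:
  assumes r: "ring R" and e: "inj e"
  shows "(\<lambda>c. c \<circ> e) \<in> lmod_hom R (free_mod R (e ` Y)) (free_mod R Y)"
proof -
  interpret R: ring R by (rule r)
  have "(c \<circ> e) \<in> carrier (free_mod R Y)" if c: "c \<in> carrier (free_mod R (e ` Y))" for c
  proof -
    have "{y. (c \<circ> e) y \<noteq> \<zero>\<^bsub>R\<^esub>} = e -` {x. c x \<noteq> \<zero>\<^bsub>R\<^esub>}" by auto
    moreover have "finite (e -` {x. c x \<noteq> \<zero>\<^bsub>R\<^esub>})"
      using c e by (intro finite_vimageI) (auto simp: free_mod_simps)
    moreover have "{y. (c \<circ> e) y \<noteq> \<zero>\<^bsub>R\<^esub>} \<subseteq> Y"
    proof
      fix x assume "x \<in> {y. (c \<circ> e) y \<noteq> \<zero>\<^bsub>R\<^esub>}"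
      then have "e x \<in> e ` Y" using c by (auto simp: free_mod_simps)
      then show "x \<in> Y" using inj_image_mem_iff[OF e] by simp
    qed
    ultimately show ?thesis using c by (auto simp: free_mod_simps)
  qed
  then show ?thesis unfolding lmod_hom_def by (auto simp: free_mod_simps comp_def)
qed

lemma push_hom:
  assumes r: "ring R" and e: "inj e"
  shows "ext_e R e \<in> lmod_hom R (free_mod R Y) (free_mod R (e ` Y))"
proof -
  interpret R: ring R by (rule r)
  have "ext_e R e a \<in> carrier (free_mod R (e ` Y))" if a: "a \<in> carrier (free_mod R Y)" for a
  proof -
    have "{q. ext_e R e a q \<noteq> \<zero>\<^bsub>R\<^esub>} \<subseteq> e ` {y. a y \<noteq> \<zero>\<^bsub>R\<^esub>}"
      using e by (auto simp: ext_e_def)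
    moreover have "e ` {y. a y \<noteq> \<zero>\<^bsub>R\<^esub>} \<subseteq> e ` Y" using a by (auto simp: free_mod_simps)
    moreover have "finite (e ` {y. a y \<noteq> \<zero>\<^bsub>R\<^esub>})" using a by (auto simp: free_mod_simps)
    moreover have "\<forall>q. ext_e R e a q \<in> carrier R" using a by (auto simp: free_mod_simps ext_e_def)
    ultimately show ?thesis unfolding free_mod_simps mem_Collect_eq
      by (meson finite_subset order_trans)
  qed
  moreover have "ext_e R e (\<lambda>x. a x \<oplus>\<^bsub>R\<^esub> b x) = (\<lambda>q. ext_e R e a q \<oplus>\<^bsub>R\<^esub> ext_e R e b q)"
    if "a \<in> carrier (free_mod R Y)" "b \<in> carrier (free_mod R Y)" for a b
    by (auto simp: ext_e_def)
  moreover have "ext_e R e (\<lambda>x. s \<otimes>\<^bsub>R\<^esub> a x) = (\<lambda>q. s \<otimes>\<^bsub>R\<^esub> ext_e R e a q)"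
    if "s \<in> carrier R" "a \<in> carrier (free_mod R Y)" for s a
    using that by (auto simp: ext_e_def)
  ultimately show ?thesis unfolding lmod_hom_def by (auto simp: free_mod_simps)
qed

lemma free_cplx_projective:
  fixes R :: "'r ring" and Y :: "int \<Rightarrow> 'b set"
  assumes r: "ring R"
  shows "projective_cplx R (free_cplx R Y) (free_cplx_d R)"
  unfolding projective_cplx_def
proof (intro conjI free_cplx_is_complex[OF r])
  interpret R: ring R by (rule r)
  show "\<exists>(X :: int \<Rightarrow> (('b \<Rightarrow> 'r) \<times> ('b \<Rightarrow> 'r)) set) \<pi> \<sigma>.
     chain_map R (free_cplx R X) (free_cplx_d R) (free_cplx R Y) (free_cplx_d R) \<pi> \<and>
     chain_map R (free_cplx R Y) (free_cplx_d R) (free_cplx R X) (free_cplx_d R) \<sigma> \<and>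
     (\<forall>n. \<forall>x\<in>carrier (free_cplx R Y n). \<pi> n (\<sigma> n x) = x)"
  proof (cases "\<exists>r1 r2 :: 'r. r1 \<noteq> r2")
    case True
    then obtain r1 r2 :: 'r where r12: "r1 \<noteq> r2" by blast
    define e :: "'b \<Rightarrow> ('b \<Rightarrow> 'r) \<times> ('b \<Rightarrow> 'r)" where "e y = ((\<lambda>z. if z = y then r1 else r2), (\<lambda>z. r1))" for y
    have inj: "inj e"
    proof (rule injI)
      fix y y' assume "e y = e y'"
      then have "(\<lambda>z. if z = y then r1 else r2) = (\<lambda>z. if z = y' then r1 else r2)" by (simp add: e_def)
      then have "(if y = y then r1 else r2) = (if y = y' then r1 else r2)" by (rule fun_cong)
      then show "y = y'" using r12 by (auto split: if_splits)
    qed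
    define X where "X n = e ` Y n" for n
    define \<pi> where "\<pi> n p = (fst p \<circ> e, snd p \<circ> e)" for n :: int and p :: "(('b \<Rightarrow> 'r) \<times> ('b \<Rightarrow> 'r) \<Rightarrow> 'r) \<times> (('b \<Rightarrow> 'r) \<times> ('b \<Rightarrow> 'r) \<Rightarrow> 'r)"
    define \<sigma> where "\<sigma> n p = (ext_e R e (fst p), ext_e R e (snd p))" for n :: int and p :: "('b \<Rightarrow> 'r) \<times> ('b \<Rightarrow> 'r)"
    show ?thesis
    proof (intro exI conjI allI ballI)
      show "chain_map R (free_cplx R X) (free_cplx_d R) (free_cplx R Y) (free_cplx_d R) \<pi>"
        unfolding chain_map_def
      proof (intro allI conjI ballI)
        fix n
        show "\<pi> n \<in> lmod_hom R (free_cplx R X n) (free_cplx R Y n)"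
          unfolding free_cplx_def \<pi>_def X_def
          by (rule hom_prod_map[OF pull_hom[OF r inj] pull_hom[OF r inj]])
        fix x
        show "\<pi> (n - 1) (free_cplx_d R n x) = free_cplx_d R n (\<pi> n x)"
          by (simp add: \<pi>_def free_cplx_d_def comp_def)
      qed
      show "chain_map R (free_cplx R Y) (free_cplx_d R) (free_cplx R X) (free_cplx_d R) \<sigma>"
        unfolding chain_map_def
      proof (intro allI conjI ballI)
        fix n
        show "\<sigma> n \<in> lmod_hom R (free_cplx R Y n) (free_cplx R X n)"
          unfolding free_cplx_def \<sigma>_def X_def
          by (rule hom_prod_map[OF push_hom[OF r inj] push_hom[OF r inj]])
        fix x
        show "\<sigma> (n - 1) (free_cplx_d R n x) = free_cplx_d R n (\<sigma> n x)"
          by (simp add: \<sigma>_def free_cplx_d_def ext_e_def)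
      qed
      fix n x
      show "\<pi> n (\<sigma> n x) = x"
        using inj by (auto simp: \<pi>_def \<sigma>_def ext_e_def comp_def)
    qed
  next
    case False
    then have triv: "\<And>u v :: 'r. u = v" by blast
    have trivf: "\<And>(u :: 'x \<Rightarrow> 'r) v. u = v" using triv by (intro ext) blast
    have trivp: "\<And>(u :: ('x \<Rightarrow> 'r) \<times> ('y \<Rightarrow> 'r)) v. u = v" using trivf by (metis prod.collapse)
    define \<pi> where "\<pi> = (\<lambda>(n::int) (p :: (('b \<Rightarrow> 'r) \<times> ('b \<Rightarrow> 'r) \<Rightarrow> 'r) \<times> (('b \<Rightarrow> 'r) \<times> ('b \<Rightarrow> 'r) \<Rightarrow> 'r)). ((\<lambda>_::'b. \<zero>\<^bsub>R\<^esub>), (\<lambda>_::'b. \<zero>\<^bsub>R\<^esub>)))"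
    define \<sigma> where "\<sigma> = (\<lambda>(n::int) (p :: ('b \<Rightarrow> 'r) \<times> ('b \<Rightarrow> 'r)). ((\<lambda>_::('b \<Rightarrow> 'r) \<times> ('b \<Rightarrow> 'r). \<zero>\<^bsub>R\<^esub>), (\<lambda>_::('b \<Rightarrow> 'r) \<times> ('b \<Rightarrow> 'r). \<zero>\<^bsub>R\<^esub>)))"
    define X :: "int \<Rightarrow> (('b \<Rightarrow> 'r) \<times> ('b \<Rightarrow> 'r)) set" where "X n = {}" for n
    show ?thesis
    proof (intro exI conjI allI ballI)
      show "chain_map R (free_cplx R X) (free_cplx_d R) (free_cplx R Y) (free_cplx_d R) \<pi>"
        unfolding chain_map_def
      proof (intro allI conjI ballI)
        fix n
        show "\<pi> n \<in> lmod_hom R (free_cplx R X n) (free_cplx R Y n)"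
          using zero_hom[OF free_cplx_lm[OF r] free_cplx_lm[OF r], of Y n X n]
          by (simp add: \<pi>_def free_cplx_def prod_mod_simps free_mod_simps)
        fix x
        show "\<pi> (n - 1) (free_cplx_d R n x) = free_cplx_d R n (\<pi> n x)" by (rule trivp)
      qed
      show "chain_map R (free_cplx R Y) (free_cplx_d R) (free_cplx R X) (free_cplx_d R) \<sigma>"
        unfolding chain_map_def
      proof (intro allI conjI ballI)
        fix n
        show "\<sigma> n \<in> lmod_hom R (free_cplx R Y n) (free_cplx R X n)"
          using zero_hom[OF free_cplx_lm[OF r] free_cplx_lm[OF r], of X n Y n]
          by (simp add: \<sigma>_def free_cplx_def prod_mod_simps free_mod_simps)
        fix x
        show "\<sigma> (n - 1) (free_cplx_d R n x) = free_cplx_d R n (\<sigma> n x)" by (rule trivp)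
      qed
      fix n x
      show "\<pi> n (\<sigma> n x) = x" by (rule trivp)
    qed
  qed
qed


theorem theorem2p6:
  fixes R :: "'r ring"
    and M :: "int \<Rightarrow> ('r, 'a) module" and dM :: "int \<Rightarrow> 'a \<Rightarrow> 'a"
    and N :: "int \<Rightarrow> ('r, 'b) module" and dN :: "int \<Rightarrow> 'b \<Rightarrow> 'b"
  assumes "ring R"
    and "is_complex R M dM" and "bounded_below M"
    and "exact_complex R N dN"
    and hyp: "\<forall>n. \<forall>g\<in>lmod_hom R (M n) (cycles N dN n).
               \<exists>P :: ('r, 'p) module. projective_mod R P \<and>
                 (\<exists>\<alpha>\<in>lmod_hom R (M n) P. \<exists>\<beta>\<in>lmod_hom R P (cycles N dN n).
                    \<forall>x\<in>carrier (M n). \<beta> (\<alpha> x) = g x)"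
  shows "\<forall>f. chain_map R M dM N dN f \<longrightarrow>
           (\<exists>(Q :: int \<Rightarrow> ('r, ('b \<Rightarrow> 'r) \<times> ('b \<Rightarrow> 'r)) module) dQ \<alpha> \<beta>.
              projective_cplx R Q dQ \<and>
              chain_map R M dM Q dQ \<alpha> \<and> chain_map R Q dQ N dN \<beta> \<and>
              (\<forall>n. \<forall>x\<in>carrier (M n). \<beta> n (\<alpha> n x) = f n x))"
proof (intro allI impI)
  fix f assume fc: "chain_map R M dM N dN f"
  note r = assms(1) and cM = assms(2) and bb = assms(3) and eN = assms(4)
  interpret R: ring R by (rule r)
  have cN: "is_complex R N dN" using eN by (simp add: exact_complex_def)
  have lmM: "\<And>k. left_module R (M k)" using cx_lm[OF cM] .
  have lmN: "\<And>k. left_module R (N k)" using cx_lm[OF cN] .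
  have lmF: "\<And>k. left_module R (free_mod R (carrier (N k)))" using free_mod_lm[OF r] .
  define eps where "eps k = lin R (N k) (\<lambda>x. x)" for k
  have eps_hom: "\<And>k. eps k \<in> lmod_hom R (free_mod R (carrier (N k))) (N k)"
    unfolding eps_def by (rule lin_hom[OF r lmN]) auto
  have eps0: "\<And>k. eps k (\<lambda>y. \<zero>\<^bsub>R\<^esub>) = \<zero>\<^bsub>N k\<^esub>"
    using hom_zero[OF lmF lmN eps_hom] by (simp add: free_mod_simps)
  obtain a where H1: "\<And>n. a n \<in> lmod_hom R (M n) (free_mod R (carrier (N (n + 1))))"
    and H2: "\<And>n x. x \<in> carrier (M n) \<Longrightarrow> f n x = dN (n + 1) (eps (n + 1) (a n x)) \<oplus>\<^bsub>N n\<^esub> eps n (a (n - 1) (dM n x))"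
    using exists_a[OF r cM bb eN hyp fc] unfolding eps_def by blast
  have H1': "\<And>n. a (n - 1) \<in> lmod_hom R (M (n - 1)) (free_mod R (carrier (N n)))"
    using H1 by (metis diff_add_cancel)
  define Y where "Y n = carrier (N n)" for n
  define Q where "Q = free_cplx R Y"
  define \<alpha> where "\<alpha> n x = (a (n - 1) (dM n x), a n x)" for n x
  define \<beta> where "\<beta> n p = eps n (fst p) \<oplus>\<^bsub>N n\<^esub> dN (n + 1) (eps (n + 1) (snd p))" for n p
  have Qn: "\<And>n. Q n = prod_mod (free_mod R (carrier (N n))) (free_mod R (carrier (N (n + 1))))"
    by (simp add: Q_def free_cplx_def Y_def)
  show "\<exists>(Q :: int \<Rightarrow> ('r, ('b \<Rightarrow> 'r) \<times> ('b \<Rightarrow> 'r)) module) dQ \<alpha> \<beta>.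
              projective_cplx R Q dQ \<and>
              chain_map R M dM Q dQ \<alpha> \<and> chain_map R Q dQ N dN \<beta> \<and>
              (\<forall>n. \<forall>x\<in>carrier (M n). \<beta> n (\<alpha> n x) = f n x)"
  proof (intro exI conjI allI ballI)
    show "projective_cplx R Q (free_cplx_d R)" unfolding Q_def by (rule free_cplx_projective[OF r])
    show "chain_map R M dM Q (free_cplx_d R) \<alpha>"
      unfolding chain_map_def
    proof (intro allI conjI ballI)
      fix n
      show "\<alpha> n \<in> lmod_hom R (M n) (Q n)"
        unfolding Qn \<alpha>_def by (intro hom_pair hom_comp[OF cx_hom[OF cM] H1'] H1)
      fix x assume x: "x \<in> carrier (M n)"
      have dd: "dM (n - 1) (dM n x) = \<zero>\<^bsub>M (n - 2)\<^esub>" using cM x by (simp add: is_complex_def)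
      have e2: "n - 1 - 1 = n - 2" by simp
      have "a (n - 2) (\<zero>\<^bsub>M (n - 2)\<^esub>) = (\<lambda>y. \<zero>\<^bsub>R\<^esub>)"
        using hom_zero[OF lmM lmF H1[of "n - 2"]] by (simp add: free_mod_simps)
      then show "\<alpha> (n - 1) (dM n x) = free_cplx_d R n (\<alpha> n x)"
        unfolding \<alpha>_def free_cplx_d_def using dd e2 by simp
    qed
    show "chain_map R Q (free_cplx_d R) N dN \<beta>"
      unfolding chain_map_def
    proof (intro allI conjI ballI)
      fix n
      show "\<beta> n \<in> lmod_hom R (Q n) (N n)"
        unfolding Qn \<beta>_def
        by (rule hom_sum_prod[OF lmF lmF lmN eps_hom hom_comp[OF eps_hom cx_hom'[OF cN]]])
      fix p assume p: "p \<in> carrier (Q n)"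
      interpret Nn: abelian_group "N n" by (rule lm_ag[OF lmN])
      interpret Nn1: abelian_group "N (n - 1)" by (rule lm_ag[OF lmN])
      have p1: "fst p \<in> carrier (free_mod R (carrier (N n)))" and p2: "snd p \<in> carrier (free_mod R (carrier (N (n + 1))))"
        using p by (auto simp: Qn prod_mod_simps)
      have u: "eps n (fst p) \<in> carrier (N n)" by (rule hom_closed[OF lmF lmN eps_hom p1])
      have v: "eps (n + 1) (snd p) \<in> carrier (N (n + 1))" by (rule hom_closed[OF lmF lmN eps_hom p2])
      have dv: "dN (n + 1) (eps (n + 1) (snd p)) \<in> carrier (N n)" by (rule hom_closed[OF lmN lmN cx_hom'[OF cN] v])
      have du: "dN n (eps n (fst p)) \<in> carrier (N (n - 1))" by (rule hom_closed[OF lmN lmN cx_hom[OF cN] u])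
      have "dN n (\<beta> n p) = dN n (eps n (fst p)) \<oplus>\<^bsub>N (n - 1)\<^esub> dN n (dN (n + 1) (eps (n + 1) (snd p)))"
        unfolding \<beta>_def by (rule hom_add[OF lmN lmN cx_hom[OF cN] u dv])
      also have "\<dots> = dN n (eps n (fst p))" using cx_dd[OF cN v] du by simp
      finally have rhs: "dN n (\<beta> n p) = dN n (eps n (fst p))" .
      have "\<beta> (n - 1) (free_cplx_d R n p) = \<zero>\<^bsub>N (n - 1)\<^esub> \<oplus>\<^bsub>N (n - 1)\<^esub> dN n (eps n (fst p))"
        by (simp add: \<beta>_def free_cplx_d_def eps0)
      also have "\<dots> = dN n (eps n (fst p))" using du by simp
      finally show "\<beta> (n - 1) (free_cplx_d R n p) = dN n (\<beta> n p)" using rhs by simp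
    qed
    fix n x assume x: "x \<in> carrier (M n)"
    interpret Nn: abelian_group "N n" by (rule lm_ag[OF lmN])
    have c1: "eps n (a (n - 1) (dM n x)) \<in> carrier (N n)"
      by (rule hom_closed[OF lmM lmN hom_comp[OF hom_comp[OF cx_hom[OF cM] H1'] eps_hom] x])
    have c2: "dN (n + 1) (eps (n + 1) (a n x)) \<in> carrier (N n)"
      by (rule hom_closed[OF lmM lmN hom_comp[OF hom_comp[OF H1 eps_hom] cx_hom'[OF cN]] x])
    show "\<beta> n (\<alpha> n x) = f n x"
      using H2[OF x] c1 c2 by (simp add: \<alpha>_def \<beta>_def Nn.a_comm)
  qed
qed

end
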